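(* Let $f^{cl}_{\pi_\star}$ be $\eta$-locally $\delta$-ISS for some $\eta>0$, with gain $\gamma$ satisfying $\gamma(x)\le O(x^{1/r})$ as $x\to0^+$ for some $r\ge1$. Fix a test policy $\pi$ and $\xi\in\mathcal X$, and let $p=r\in\mathbb N$. Assume $\pi,\pi_\star$ are $p$-times continuously differentiable with $\|\bar\pi(x)-\sum_{j=0}^p\frac1{j!}\partial_x^j\bar\pi(x_0)(x-x_0)^{\otimes j}\|\le\frac{L_{\partial^p\pi}}{(p+1)!}\|x-x_0\|^{p+1}$ for all $x,x_0$ and $\bar\pi\in\{\pi,\pi_\star\}$. Choose $\mu,\alpha>0$, $\alpha\le1/2$, with \[2\tfrac{L_{\partial^p\pi}}{(p+1)!}x^{p+1}+(x/\mu)^p\le\gamma^{-1}(x)\quad\text{for all }0\le x\le\alpha.\] If \[\max_{0\le t\le T-1}\max_{0\le j\le p-1}\mu\Big(\tfrac{4}{j!}\|\partial_x^j\Delta_t^{\pi_\star}(\xi;\pi)\|\Big)^{1/p}\le\alpha,\] \[\max_{0\le t\le T-1}\max_{0\le j\le p-1}\Big[\tfrac{2L_{\partial^p\pi}\mu^{p+1}}{(p+1)!}\Big(\tfrac{4}{j!}\|\partial_x^j\Delta_t^{\pi_\star}(\xi;\pi)\|\Big)^{\frac{p+1}{p}}+\tfrac4{j!}\|\partial_x^j\Delta_t^{\pi_\star}(\xi;\pi)\|\Big]\le\eta,\] and $\|\partial_x^p\Delta_t^{\pi_\star}(\xi;\pi)\|\le\frac{p!}{2\mu^p}$ for all $0\le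 t\le T-1$, then for all $1\le t\le T$, \[\|x_t^{\pi_\star}(\xi)-x_t^\pi(\xi)\|\le\max_{0\le k\le t-1}\max_{0\le j\le p-1}\mu\Big(\tfrac4{j!}\Big)^{1/r}\|\partial_x^j\Delta_k^{\pi_\star}(\xi;\pi)\|^{1/r}.\]
   Context: Dynamics $x_{t+1}=f(x_t,u_t)$, $x_0=\xi$. For a policy $\pi$, $f^{cl}_\pi(x,\Delta):=f(x,\pi(x)+\Delta)$; $x_t^\pi(\xi,\{\Delta_s\})$ is the state at time $t$, $x_t^\pi(\xi):=x_t^\pi(\xi,\{0\})$. Initial conditions lie in compact $\mathcal X$. Norms: Euclidean/operator norm. $f^{cl}_\pi$ is $\eta$-locally $\delta$-ISS if there are class $\mathcal{KL}$ $\beta$ and class $\mathcal K$ $\gamma$ with $\|x_t^\pi(\xi_1;\{\Delta_s\}_{s=0}^{t-1})-x_t^\pi(\xi_2;\{0\})\|\le\beta(\|\xi_1-\xi_2\|,t)+\gamma(\max_{0\le k\le t-1}\|\Delta_k\|)$ for all $\xi_1,\xi_2\in\mathcal X$, $t$, and perturbations with $\sup_t\|\Delta_t\|\le\eta$. $\gamma^{-1}$ is the inverse on the range of $\gamma$ ($+\infty$ beyond it). $\partial_x^j\Delta_t^{\pi_\star}(\xi;\pi):=\partial_x^j\pi(x_t^{\pi_\star}(\xi))-\partial_x^j\pi_\star(x_t^{\pi_\star}(\xi))$ for expert policy $\pi_\star$. *)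

theory Defs
  imports "HOL-Analysis.Analysis"
begin

primrec traj :: "('x \<Rightarrow> 'u \<Rightarrow> 'x) \<Rightarrow> ('x \<Rightarrow> 'u::plus) \<Rightarrow> 'x \<Rightarrow> (nat \<Rightarrow> 'u) \<Rightarrow> nat \<Rightarrow> 'x" where
  "traj f \<pi> \<xi> \<Delta> 0 = \<xi>"
| "traj f \<pi> \<xi> \<Delta> (Suc t) = f (traj f \<pi> \<xi> \<Delta> t) (\<pi> (traj f \<pi> \<xi> \<Delta> t) + \<Delta> t)"

definition class_K :: "(real \<Rightarrow> real) \<Rightarrow> bool" where
  "class_K g \<longleftrightarrow> g 0 = 0 \<and> continuous_on {0..} g \<and> strict_mono_on {0..} g"

definition class_KL :: "(real \<Rightarrow> nat \<Rightarrow> real) \<Rightarrow> bool" where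
  "class_KL b \<longleftrightarrow> (\<forall>t. class_K (\<lambda>s. b s t)) \<and>
     (\<forall>s\<ge>0. antimono (\<lambda>t. b s t) \<and> (\<lambda>t. b s t) \<longlonglongrightarrow> 0)"

definition max_pert :: "(nat \<Rightarrow> 'u::real_normed_vector) \<Rightarrow> nat \<Rightarrow> real" where
  "max_pert \<Delta> t = Max (insert 0 ((\<lambda>k. norm (\<Delta> k)) ` {..<t}))"

definition local_dISS ::
  "('x::real_normed_vector \<Rightarrow> 'u::real_normed_vector \<Rightarrow> 'x) \<Rightarrow> ('x \<Rightarrow> 'u) \<Rightarrow> 'x set \<Rightarrow> real
    \<Rightarrow> (real \<Rightarrow> nat \<Rightarrow> real) \<Rightarrow> (real \<Rightarrow> real) \<Rightarrow> bool" where
  "local_dISS f \<pi> X \<eta> \<beta> \<gamma> \<longleftrightarrow> class_KL \<beta> \<and> class_K \<gamma> \<and>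
     (\<forall>\<xi>1\<in>X. \<forall>\<xi>2\<in>X. \<forall>\<Delta> t. (\<forall>s. norm (\<Delta> s) \<le> \<eta>) \<longrightarrow>
        norm (traj f \<pi> \<xi>1 \<Delta> t - traj f \<pi> \<xi>2 (\<lambda>_. 0) t)
          \<le> \<beta> (norm (\<xi>1 - \<xi>2)) t + \<gamma> (max_pert \<Delta> t))"

(* inverse of gamma on its range (over [0,inf)), +infinity beyond it *)
definition ginv :: "(real \<Rightarrow> real) \<Rightarrow> real \<Rightarrow> ereal" where
  "ginv g y = (if \<exists>s\<ge>0. g s = y then ereal (THE s. s \<ge> 0 \<and> g s = y) else \<infinity>)"

(* j-th derivative applied to directions hs 0, ..., hs (j-1):
   dd pi j x hs = D^j pi(x)[hs 0, ..., hs (j-1)] *)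
primrec dd :: "('x::real_normed_vector \<Rightarrow> 'u::real_normed_vector) \<Rightarrow> nat \<Rightarrow> 'x \<Rightarrow> (nat \<Rightarrow> 'x) \<Rightarrow> 'u" where
  "dd \<pi> 0 x hs = \<pi> x"
| "dd \<pi> (Suc j) x hs = frechet_derivative (\<lambda>y. dd \<pi> j y hs) (at x) (hs j)"

definition Cp :: "('x::real_normed_vector \<Rightarrow> 'u::real_normed_vector) \<Rightarrow> nat \<Rightarrow> bool" where
  "Cp \<pi> p \<longleftrightarrow> (\<forall>j<p. \<forall>hs x. (\<lambda>y. dd \<pi> j y hs) differentiable (at x)) \<and>
               (\<forall>j\<le>p. \<forall>hs. continuous_on UNIV (\<lambda>y. dd \<pi> j y hs))"

definition mlnorm :: "nat \<Rightarrow> ((nat \<Rightarrow> 'x::real_normed_vector) \<Rightarrow> 'u::real_normed_vector) \<Rightarrow> real" where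
  "mlnorm j F = Sup {norm (F hs) | hs. \<forall>i<j. norm (hs i) \<le> 1}"

definition dDelta_norm ::
  "('x::real_normed_vector \<Rightarrow> 'u::real_normed_vector \<Rightarrow> 'x) \<Rightarrow> ('x \<Rightarrow> 'u) \<Rightarrow> ('x \<Rightarrow> 'u) \<Rightarrow> 'x \<Rightarrow> nat \<Rightarrow> nat \<Rightarrow> real" where
  "dDelta_norm f \<pi>s \<pi> \<xi> j t =
     mlnorm j (\<lambda>hs. dd \<pi> j (traj f \<pi>s \<xi> (\<lambda>_. 0) t) hs - dd \<pi>s j (traj f \<pi>s \<xi> (\<lambda>_. 0) t) hs)"

end

theory Submission imports Defs begin



definition mlin :: "nat \<Rightarrow> ((nat \<Rightarrow> 'x::real_normed_vector) \<Rightarrow> 'u::real_normed_vector) \<Rightarrow> bool" where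
  "mlin j F \<longleftrightarrow> (\<forall>i<j. \<forall>hs. linear (\<lambda>v. F (hs(i:=v)))) \<and> (\<forall>hs hs'. (\<forall>i<j. hs i = hs' i) \<longrightarrow> F hs = F hs')"

lemma mlin_D: "mlin j F \<Longrightarrow> (\<And>i. i < j \<Longrightarrow> hs i = hs' i) \<Longrightarrow> F hs = F hs'"
  unfolding mlin_def by blast

lemma mlin_L: "mlin j F \<Longrightarrow> i < j \<Longrightarrow> linear (\<lambda>v. F (hs(i:=v)))"
  unfolding mlin_def by blast

lemma mlin_diff:
  assumes "mlin j F" "mlin j G" shows "mlin j (\<lambda>hs. F hs - G hs)"
proof -
  have "linear (\<lambda>v. F (hs(i:=v)) - G (hs(i:=v)))" if "i < j" for i hs
    using mlin_L[OF assms(1) that] mlin_L[OF assms(2) that] by (rule real_vector.linear_compose_sub)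
  moreover have "F hs - G hs = F hs' - G hs'" if "\<forall>i<j. hs i = hs' i" for hs hs'
    using mlin_D[OF assms(1), of hs hs'] mlin_D[OF assms(2), of hs hs'] that by simp
  ultimately show ?thesis unfolding mlin_def by blast
qed

lemma mlin_bdd_aux:
  fixes F :: "(nat \<Rightarrow> 'x::euclidean_space) \<Rightarrow> 'u::real_normed_vector"
  assumes "mlin j F" "m \<le> j"
  shows "\<exists>K. \<forall>hs. (\<forall>i<m. norm (hs i) \<le> 1) \<and> (\<forall>i\<ge>m. hs i = hs0 i) \<longrightarrow> norm (F hs) \<le> K"
  using assms(2)
proof (induction m arbitrary: hs0)
  case 0
  show ?case
  proof (rule exI[of _ "norm (F hs0)"], intro allI impI)
    fix hs assume "(\<forall>i<0. norm (hs i) \<le> (1::real)) \<and> (\<forall>i\<ge>0. hs i = hs0 i)"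
    then have "hs = hs0" by auto
    then show "norm (F hs) \<le> norm (F hs0)" by simp
  qed
next
  case (Suc m)
  have lin: "\<And>hs. linear (\<lambda>v. F (hs(m:=v)))" using mlin_L[OF assms(1)] Suc.prems by simp
  have "\<forall>b\<in>Basis. \<exists>K. \<forall>hs. (\<forall>i<m. norm (hs i) \<le> 1) \<and> (\<forall>i\<ge>m. hs i = (hs0(m:=b)) i) \<longrightarrow> norm (F hs) \<le> K"
    using Suc by auto
  then obtain K where K: "\<And>b hs. b \<in> Basis \<Longrightarrow> (\<forall>i<m. norm (hs i) \<le> 1) \<and> (\<forall>i\<ge>m. hs i = (hs0(m:=b)) i) \<Longrightarrow> norm (F hs) \<le> K b"
    by metis
  show ?case
  proof (rule exI[of _ "\<Sum>b\<in>Basis. \<bar>K b\<bar>"], intro allI impI)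
    fix hs :: "nat \<Rightarrow> 'x" assume hs: "(\<forall>i<Suc m. norm (hs i) \<le> 1) \<and> (\<forall>i\<ge>Suc m. hs i = hs0 i)"
    have "F hs = F (hs(m := (\<Sum>b\<in>Basis. (hs m \<bullet> b) *\<^sub>R b)))"
      by (simp add: euclidean_representation)
    also have "\<dots> = (\<Sum>b\<in>Basis. (hs m \<bullet> b) *\<^sub>R F (hs(m:=b)))"
      apply (subst real_vector.linear_sum[OF lin[of hs]])
      apply (simp add: linear_cmul[OF lin[of hs]])
      done
    finally have eq: "F hs = (\<Sum>b\<in>Basis. (hs m \<bullet> b) *\<^sub>R F (hs(m:=b)))" .
    have "norm (F hs) \<le> (\<Sum>b\<in>Basis. norm ((hs m \<bullet> b) *\<^sub>R F (hs(m:=b))))"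
      unfolding eq by (rule norm_sum)
    also have "\<dots> \<le> (\<Sum>b\<in>Basis. \<bar>K b\<bar>)"
    proof (rule sum_mono)
      fix b :: 'x assume b: "b \<in> Basis"
      have c: "\<bar>hs m \<bullet> b\<bar> \<le> 1" using Basis_le_norm[OF b, of "hs m"] hs by force
      have "norm (F (hs(m:=b))) \<le> K b"
        apply (rule K[OF b]) using hs by auto
      then have "\<bar>hs m \<bullet> b\<bar> * norm (F (hs(m:=b))) \<le> 1 * \<bar>K b\<bar>"
        using c by (intro mult_mono) auto
      then show "norm ((hs m \<bullet> b) *\<^sub>R F (hs(m:=b))) \<le> \<bar>K b\<bar>" by simp
    qed
    finally show "norm (F hs) \<le> (\<Sum>b\<in>Basis. \<bar>K b\<bar>)" .
  qed
qed

lemma mlin_bdd: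
  fixes F :: "(nat \<Rightarrow> 'x::euclidean_space) \<Rightarrow> 'u::real_normed_vector"
  assumes "mlin j F"
  shows "bdd_above {norm (F hs) | hs. \<forall>i<j. norm (hs i) \<le> 1}"
proof -
  obtain K where K: "\<And>hs. (\<forall>i<j. norm (hs i) \<le> 1) \<and> (\<forall>i\<ge>j. hs i = 0) \<Longrightarrow> norm (F hs) \<le> K"
    using mlin_bdd_aux[OF assms order_refl, of "\<lambda>_. 0"] by blast
  show ?thesis unfolding bdd_above_def
  proof (rule exI[of _ K], safe)
    fix hs :: "nat \<Rightarrow> 'x" assume h: "\<forall>i<j. norm (hs i) \<le> 1"
    have "F hs = F (\<lambda>i. if i < j then hs i else 0)"
      by (rule mlin_D[OF assms]) simp
    also have "norm \<dots> \<le> K" using h by (intro K) auto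
    finally show "norm (F hs) \<le> K" by simp
  qed
qed

lemma mlin_hom:
  assumes "mlin j F"
  shows "F (\<lambda>_. c *\<^sub>R u) = c ^ j *\<^sub>R F (\<lambda>_. u)"
proof -
  have "m \<le> j \<Longrightarrow> F (\<lambda>i. if i < m then c *\<^sub>R u else u) = c ^ m *\<^sub>R F (\<lambda>_. u)" for m
  proof (induction m)
    case 0 then show ?case by simp
  next
    case (Suc m)
    have lin: "linear (\<lambda>v. F ((\<lambda>i. if i < m then c *\<^sub>R u else u)(m:=v)))"
      using mlin_L[OF assms] Suc.prems by simp
    have e1: "(\<lambda>i. if i < Suc m then c *\<^sub>R u else u) = (\<lambda>i. if i < m then c *\<^sub>R u else u)(m := c *\<^sub>R u)"
      by (auto simp: fun_eq_iff)
    have e2: "(\<lambda>i. if i < m then c *\<^sub>R u else u)(m := u) = (\<lambda>i. if i < m then c *\<^sub>R u else u)"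
      by (auto simp: fun_eq_iff)
    show ?case unfolding e1 linear_cmul[OF lin] e2 using Suc by simp
  qed
  moreover have "F (\<lambda>_. c *\<^sub>R u) = F (\<lambda>i. if i < j then c *\<^sub>R u else u)"
    by (rule mlin_D[OF assms]) simp
  ultimately show ?thesis by simp
qed

lemma mlin_norm:
  fixes F :: "(nat \<Rightarrow> 'x::euclidean_space) \<Rightarrow> 'u::real_normed_vector"
  assumes "mlin j F"
  shows "norm (F (\<lambda>_. d)) \<le> mlnorm j F * norm d ^ j" "0 \<le> mlnorm j F"
proof -
  have bdd: "bdd_above {norm (F hs) | hs. \<forall>i<j. norm (hs i) \<le> 1}" by (rule mlin_bdd[OF assms])
  have up: "norm (F hs) \<le> mlnorm j F" if "\<forall>i<j. norm (hs i) \<le> 1" for hs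
    unfolding mlnorm_def using that by (intro cSup_upper[OF _ bdd]) auto
  show "0 \<le> mlnorm j F" using order_trans[OF norm_ge_zero up[of "\<lambda>_. 0"]] by simp
  have "F (\<lambda>_. d) = F (\<lambda>_. norm d *\<^sub>R sgn d)" by (cases "d = 0") (simp_all add: sgn_div_norm)
  also have "\<dots> = norm d ^ j *\<^sub>R F (\<lambda>_. sgn d)" by (rule mlin_hom[OF assms])
  finally have "norm (F (\<lambda>_. d)) = norm d ^ j * norm (F (\<lambda>_. sgn d))" by simp
  also have "\<dots> \<le> norm d ^ j * mlnorm j F"
    by (intro mult_left_mono up) (auto simp: norm_sgn)
  finally show "norm (F (\<lambda>_. d)) \<le> mlnorm j F * norm d ^ j" by (simp add: mult.commute)
qed

lemma dd_dep: "(\<forall>i<j. hs i = hs' i) \<Longrightarrow> dd \<pi> j x hs = dd \<pi> j x hs'"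
proof (induction j arbitrary: x)
  case 0 then show ?case by simp
next
  case (Suc j)
  have "(\<lambda>y. dd \<pi> j y hs) = (\<lambda>y. dd \<pi> j y hs')" using Suc by auto
  then show ?case using Suc.prems by simp
qed

lemma fd_linear:
  assumes "f differentiable (at x)" shows "linear (frechet_derivative f (at x))"
  using assms frechet_derivative_works has_derivative_linear by blast

lemma dd_lin:
  assumes "Cp \<pi> p" "j \<le> p" "i < j"
  shows "linear (\<lambda>v. dd \<pi> j x (hs(i:=v)))"
  using assms(2,3)
proof (induction j arbitrary: i x hs)
  case 0 then show ?case by simp
next
  case (Suc j)
  have diff: "\<And>hs x. (\<lambda>y. dd \<pi> j y hs) differentiable (at x)"
    using assms(1) Suc.prems unfolding Cp_def by auto
  show ?case
  proof (cases "i = j")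
    case True
    have "\<And>v. (\<lambda>y. dd \<pi> j y (hs(j:=v))) = (\<lambda>y. dd \<pi> j y hs)"
      by (intro ext dd_dep) auto
    then have eq: "\<And>v. dd \<pi> (Suc j) x (hs(j:=v)) = frechet_derivative (\<lambda>y. dd \<pi> j y hs) (at x) v"
      by (simp only: dd.simps fun_upd_same)
    show ?thesis using fd_linear[OF diff[of hs x]] by (simp only: True eq)
  next
    case False
    then have ij: "i < j" using Suc.prems by simp
    have lin: "\<And>y. linear (\<lambda>v. dd \<pi> j y (hs(i:=v)))" by (rule Suc.IH) (use Suc.prems ij in auto)
    have D: "((\<lambda>y. dd \<pi> j y (hs(i:=v))) has_derivative frechet_derivative (\<lambda>y. dd \<pi> j y (hs(i:=v))) (at x)) (at x)" for v
      using diff frechet_derivative_works by blast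
    have hj: "(hs(i:=v)) j = hs j" for v using ij by simp
    show ?thesis
    proof (rule linearI)
      fix a b
      have e: "(\<lambda>y. dd \<pi> j y (hs(i:=a+b))) = (\<lambda>y. dd \<pi> j y (hs(i:=a)) + dd \<pi> j y (hs(i:=b)))"
        using real_vector.linear_add[OF lin] by auto
      have "((\<lambda>y. dd \<pi> j y (hs(i:=a+b))) has_derivative
          (\<lambda>h. frechet_derivative (\<lambda>y. dd \<pi> j y (hs(i:=a))) (at x) h + frechet_derivative (\<lambda>y. dd \<pi> j y (hs(i:=b))) (at x) h)) (at x)"
        unfolding e by (intro has_derivative_add D)
      from fun_cong[OF frechet_derivative_at[OF this], of "hs j"]
      show "dd \<pi> (Suc j) x (hs(i := a + b)) = dd \<pi> (Suc j) x (hs(i := a)) + dd \<pi> (Suc j) x (hs(i := b))"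
        by (simp only: dd.simps hj)
    next
      fix r a
      have e: "(\<lambda>y. dd \<pi> j y (hs(i:=r *\<^sub>R a))) = (\<lambda>y. r *\<^sub>R dd \<pi> j y (hs(i:=a)))"
        using linear_cmul[OF lin] by auto
      have "((\<lambda>y. dd \<pi> j y (hs(i:=r *\<^sub>R a))) has_derivative
          (\<lambda>h. r *\<^sub>R frechet_derivative (\<lambda>y. dd \<pi> j y (hs(i:=a))) (at x) h)) (at x)"
        unfolding e by (intro has_derivative_scaleR_right D)
      from fun_cong[OF frechet_derivative_at[OF this], of "hs j"]
      show "dd \<pi> (Suc j) x (hs(i := r *\<^sub>R a)) = r *\<^sub>R dd \<pi> (Suc j) x (hs(i := a))"
        by (simp only: dd.simps hj)
    qed
  qed
qed

lemma dd_mlin: "Cp \<pi> p \<Longrightarrow> j \<le> p \<Longrightarrow> mlin j (dd \<pi> j x)"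
  unfolding mlin_def using dd_lin[of \<pi> p j] dd_dep[of j] by blast



lemma geom_le: "0 \<le> (x::real) \<Longrightarrow> x \<le> 1/2 \<Longrightarrow> (\<Sum>j<n. x ^ j) \<le> 2 - 2 * x ^ n"
proof (induction n)
  case 0 then show ?case by simp
next
  case (Suc n)
  have "x ^ n * (2 * x) \<le> x ^ n * 1" using Suc.prems by (intro mult_left_mono) auto
  then have "2 * (x * x ^ n) \<le> x ^ n" by (simp add: algebra_simps)
  then show ?case using Suc by simp
qed

lemma powr_pow_aux:
  assumes "0 \<le> (y::real)" "n > 0" "p > 0"
  shows "(y powr (1 / real p)) ^ n = y powr (real n / real p)"
proof (cases "y = 0")
  case True then show ?thesis using assms by simp
next
  case False
  then have "(y powr (1 / real p)) ^ n = (y powr (1 / real p)) powr real n"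
    using assms by (simp add: powr_realpow)
  also have "\<dots> = y powr (real n / real p)" by (simp add: powr_powr)
  finally show ?thesis .
qed

lemma taylor_diff:
  fixes \<pi> \<pi>s :: "'x::euclidean_space \<Rightarrow> 'u::euclidean_space"
  assumes "Cp \<pi> p" "Cp \<pi>s p"
    and t1: "norm (\<pi> x - (\<Sum>j\<le>p. (1 / fact j) *\<^sub>R dd \<pi> j x0 (\<lambda>_. x - x0))) \<le> L / fact (p + 1) * norm (x - x0) ^ (p + 1)"
    and t2: "norm (\<pi>s x - (\<Sum>j\<le>p. (1 / fact j) *\<^sub>R dd \<pi>s j x0 (\<lambda>_. x - x0))) \<le> L / fact (p + 1) * norm (x - x0) ^ (p + 1)"
  shows "norm (\<pi> x - \<pi>s x) \<le> 2 * (L / fact (p + 1)) * norm (x - x0) ^ (p + 1)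
      + (\<Sum>j\<le>p. 1 / fact j * mlnorm j (\<lambda>hs. dd \<pi> j x0 hs - dd \<pi>s j x0 hs) * norm (x - x0) ^ j)"
proof -
  define d where "d = x - x0"
  define A where "A = (\<Sum>j\<le>p. (1 / fact j) *\<^sub>R dd \<pi> j x0 (\<lambda>_. d))"
  define Bs where "Bs = (\<Sum>j\<le>p. (1 / fact j) *\<^sub>R dd \<pi>s j x0 (\<lambda>_. d))"
  have e: "\<pi> x - \<pi>s x = (\<pi> x - A) - (\<pi>s x - Bs) + (A - Bs)" by simp
  have n1: "norm ((\<pi> x - A) - (\<pi>s x - Bs) + (A - Bs)) \<le> norm ((\<pi> x - A) - (\<pi>s x - Bs)) + norm (A - Bs)"
    by (rule norm_triangle_ineq)
  have n2: "norm ((\<pi> x - A) - (\<pi>s x - Bs)) \<le> norm (\<pi> x - A) + norm (\<pi>s x - Bs)"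
    by (rule norm_triangle_ineq4)
  have "norm (\<pi> x - \<pi>s x) \<le> norm (\<pi> x - A) + norm (\<pi>s x - Bs) + norm (A - Bs)"
    unfolding e using n1 n2 by linarith
  moreover have ABs: "A - Bs = (\<Sum>j\<le>p. (1 / fact j) *\<^sub>R (dd \<pi> j x0 (\<lambda>_. d) - dd \<pi>s j x0 (\<lambda>_. d)))"
    unfolding A_def Bs_def by (simp add: sum_subtractf scaleR_diff_right)
  have "norm (A - Bs) \<le> (\<Sum>j\<le>p. norm ((1 / fact j) *\<^sub>R (dd \<pi> j x0 (\<lambda>_. d) - dd \<pi>s j x0 (\<lambda>_. d))))"
    unfolding ABs by (rule norm_sum)
  also have "\<dots> \<le> (\<Sum>j\<le>p. 1 / fact j * mlnorm j (\<lambda>hs. dd \<pi> j x0 hs - dd \<pi>s j x0 hs) * norm d ^ j)"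
  proof (rule sum_mono)
    fix j assume "j \<in> {..p}"
    then have ml: "mlin j (\<lambda>hs. dd \<pi> j x0 hs - dd \<pi>s j x0 hs)"
      using assms(1,2) by (intro mlin_diff dd_mlin) auto
    show "norm ((1 / fact j) *\<^sub>R (dd \<pi> j x0 (\<lambda>_. d) - dd \<pi>s j x0 (\<lambda>_. d)))
        \<le> 1 / fact j * mlnorm j (\<lambda>hs. dd \<pi> j x0 hs - dd \<pi>s j x0 hs) * norm d ^ j"
      using mlin_norm(1)[OF ml, of d] by (simp add: mult.assoc divide_right_mono)
  qed
  finally show ?thesis using t1 t2 unfolding A_def Bs_def d_def by linarith
qed

lemma traj_eq:
  fixes \<Delta> :: "nat \<Rightarrow> 'u::ab_group_add"
  assumes "\<forall>s<t. \<Delta> s = \<pi> (traj f \<pi> \<xi> (\<lambda>_. 0) s) - \<pi>s (traj f \<pi> \<xi> (\<lambda>_. 0) s)"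
  shows "n \<le> t \<Longrightarrow> traj f \<pi>s \<xi> \<Delta> n = traj f \<pi> \<xi> (\<lambda>_. 0) n"
  by (induction n) (use assms in auto)

lemma gamma_bound:
  assumes K: "class_K \<gamma>" and M: "0 \<le> M" and B: "0 \<le> B" and g: "ereal B \<le> ginv \<gamma> M"
  shows "\<gamma> B \<le> M"
proof (cases "\<exists>s\<ge>0. \<gamma> s = M")
  case True
  then obtain s where s: "s \<ge> 0" "\<gamma> s = M" by blast
  have sm: "strict_mono_on {0..} \<gamma>" using K unfolding class_K_def by auto
  have "(THE s. s \<ge> 0 \<and> \<gamma> s = M) = s"
  proof (rule the_equality)
    show "s \<ge> 0 \<and> \<gamma> s = M" using s by simp
    fix s' assume "s' \<ge> 0 \<and> \<gamma> s' = M"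
    then show "s' = s" using strict_mono_on_eqD[OF sm, of s s'] s by simp
  qed
  then have "B \<le> s" using g True unfolding ginv_def by simp
  then show ?thesis using strict_mono_on_leD[OF sm, of B s] B s by simp
next
  case False
  show ?thesis
  proof (rule ccontr)
    assume "\<not> \<gamma> B \<le> M"
    moreover have "continuous_on {0..B} \<gamma>" using K unfolding class_K_def
      by (auto intro: continuous_on_subset)
    moreover have "\<gamma> 0 \<le> M" using K M unfolding class_K_def by simp
    ultimately have "\<exists>s. 0 \<le> s \<and> s \<le> B \<and> \<gamma> s = M" using B by (intro IVT') auto
    then obtain s where "0 \<le> s" "\<gamma> s = M" by blast
    then show False using False by blast
  qed
qed

theorem mainTheorem4:
  fixes f :: "'x::euclidean_space \<Rightarrow> 'u::euclidean_space \<Rightarrow> 'x"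
    and \<pi>s \<pi> :: "'x \<Rightarrow> 'u"
    and X :: "'x set" and \<xi> :: 'x
    and \<eta> L \<mu> \<alpha> :: real
    and \<beta> :: "real \<Rightarrow> nat \<Rightarrow> real" and \<gamma> :: "real \<Rightarrow> real"
    and p T :: nat
  assumes X: "compact X"
    and eta: "\<eta> > 0"
    and ISS: "local_dISS f \<pi>s X \<eta> \<beta> \<gamma>"
    and p: "p \<ge> 1"
    and gain: "\<exists>C. \<forall>\<^sub>F x in at_right 0. \<gamma> x \<le> C * x powr (1 / real p)"
    and smooth: "Cp \<pi> p" "Cp \<pi>s p"
    and taylor: "\<forall>\<pi>b\<in>{\<pi>, \<pi>s}. \<forall>x x0.
        norm (\<pi>b x - (\<Sum>j\<le>p. (1 / fact j) *\<^sub>R dd \<pi>b j x0 (\<lambda>_. x - x0)))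
          \<le> L / fact (p + 1) * norm (x - x0) ^ (p + 1)"
    and mu: "\<mu> > 0" and alpha: "\<alpha> > 0" "\<alpha> \<le> 1/2"
    and ginv_cond: "\<forall>x\<in>{0..\<alpha>}.
        ereal (2 * (L / fact (p + 1)) * x ^ (p + 1) + (x / \<mu>) ^ p) \<le> ginv \<gamma> x"
    and xi: "\<xi> \<in> X"
    and H1: "\<forall>t<T. \<forall>j<p. \<mu> * (4 / fact j * dDelta_norm f \<pi>s \<pi> \<xi> j t) powr (1 / real p) \<le> \<alpha>"
    and H2: "\<forall>t<T. \<forall>j<p.
        2 * L * \<mu> ^ (p + 1) / fact (p + 1)
          * (4 / fact j * dDelta_norm f \<pi>s \<pi> \<xi> j t) powr ((real p + 1) / real p)
        + 4 / fact j * dDelta_norm f \<pi>s \<pi> \<xi> j t \<le> \<eta>"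
    and H3: "\<forall>t<T. dDelta_norm f \<pi>s \<pi> \<xi> p t \<le> fact p / (2 * \<mu> ^ p)"
  shows "\<forall>t\<in>{1..T}.
    norm (traj f \<pi>s \<xi> (\<lambda>_. 0) t - traj f \<pi> \<xi> (\<lambda>_. 0) t)
      \<le> Max {\<mu> * (4 / fact j) powr (1 / real p) * dDelta_norm f \<pi>s \<pi> \<xi> j k powr (1 / real p)
              | k j. k < t \<and> j < p}"
proof -
  define xs where "xs = (\<lambda>t. traj f \<pi>s \<xi> (\<lambda>_. 0) t)"
  define xp where "xp = (\<lambda>t. traj f \<pi> \<xi> (\<lambda>_. 0) t)"
  define a where "a = (\<lambda>j k. dDelta_norm f \<pi>s \<pi> \<xi> j k)"
  define e where "e = (\<lambda>k j. \<mu> * (4 / fact j) powr (1 / real p) * a j k powr (1 / real p))"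
  define Ms where "Ms = (\<lambda>t. {\<mu> * (4 / fact j) powr (1 / real p) * dDelta_norm f \<pi>s \<pi> \<xi> j k powr (1 / real p) | k j. k < t \<and> j < p})"
  define Mt where "Mt = (\<lambda>t. Max (Ms t))"
  define Bf where "Bf = (\<lambda>M::real. 2 * (L / fact (p + 1)) * M ^ (p + 1) + (M / \<mu>) ^ p)"
  have p0: "p > 0" using p by simp
  have a_def': "a j k = mlnorm j (\<lambda>hs. dd \<pi> j (xs k) hs - dd \<pi>s j (xs k) hs)" for j k
    unfolding a_def dDelta_norm_def xs_def ..
  have a_nn: "0 \<le> a j k" if "j \<le> p" for j k
    unfolding a_def' using that smooth
    by (intro mlin_norm(2) mlin_diff dd_mlin) auto
  have Ms_eq: "Ms t = (\<lambda>(k,j). e k j) ` ({..<t} \<times> {..<p})" for t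
    unfolding Ms_def e_def a_def by auto
  have fin: "finite (Ms t)" for t unfolding Ms_eq by simp
  have ne: "Ms t \<noteq> {}" if "1 \<le> t" for t unfolding Ms_eq using that p by (auto simp: lessThan_empty_iff)
  have e_nn: "0 \<le> e k j" for k j unfolding e_def using mu by simp
  have e_alt: "e k j = \<mu> * (4 / fact j * a j k) powr (1 / real p)" if "j < p" for k j
    unfolding e_def using powr_mult[of "4 / fact j" "a j k" "1 / real p"] a_nn[of j k] that by simp
  have in_max: "\<exists>k j. k < t \<and> j < p \<and> Mt t = e k j" if "1 \<le> t" for t
  proof -
    have "Mt t \<in> Ms t" unfolding Mt_def using fin ne[OF that] by (rule Max_in)
    then show ?thesis unfolding Ms_eq by auto
  qed
  have le_max: "e k j \<le> Mt t" if "k < t" "j < p" for k j t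
    unfolding Mt_def using fin that by (intro Max_ge) (auto simp: Ms_eq)
  have Mt_nn: "0 \<le> Mt t" if "1 \<le> t" for t
    using in_max[OF that] e_nn by metis
  have Mt_alpha: "Mt t \<le> \<alpha>" if tt: "1 \<le> t" "t \<le> T" for t
  proof -
    obtain k j where kj: "k < t" "j < p" "Mt t = e k j" using in_max[OF tt(1)] by blast
    then show ?thesis using H1 tt e_alt[of j k] unfolding a_def by auto
  qed
  have y_pow: "((4 / fact j * a j k) powr (1 / real p)) ^ p = 4 / fact j * a j k" if "j < p" for j k
    using powr_pow_aux[of "4 / fact j * a j k" p p] a_nn[of j k] that p0 by simp
  have Mt_eta: "Bf (Mt t) \<le> \<eta>" if tt: "1 \<le> t" "t \<le> T" for t
  proof -
    obtain k j where kj: "k < t" "j < p" "Mt t = e k j" using in_max[OF tt(1)] by blast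
    define y where "y = 4 / fact j * a j k"
    have y0: "0 \<le> y" unfolding y_def using a_nn[of j k] kj by simp
    have M: "Mt t = \<mu> * y powr (1 / real p)" using kj e_alt unfolding y_def by simp
    have m1: "Mt t ^ (p + 1) = \<mu> ^ (p + 1) * y powr ((real p + 1) / real p)"
      unfolding M power_mult_distrib using powr_pow_aux[OF y0, of "p+1" p] p0 by (simp add: add.commute)
    have m2: "(Mt t / \<mu>) ^ p = y"
      using M mu y_pow[OF kj(2), of k] unfolding y_def by simp
    have "2 * L * \<mu> ^ (p + 1) / fact (p + 1) * y powr ((real p + 1) / real p) + y \<le> \<eta>"
      using H2 kj tt unfolding y_def a_def by auto
    then show ?thesis unfolding Bf_def m1 m2 by (simp add: field_simps)
  qed
  have Mt_mono: "Mt k \<le> Mt t" if "1 \<le> k" "k \<le> t" for k t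
  proof -
    have "Ms k \<subseteq> Ms t" unfolding Ms_eq using that by (intro image_mono) auto
    then show ?thesis unfolding Mt_def using fin ne[OF that(1)] by (intro Max_mono) auto
  qed
  have ratio: "4 / fact j * a j k \<le> (Mt t / \<mu>) ^ p" if "k < t" "j < p" for k j t
  proof -
    have y0: "0 \<le> 4 / fact j * a j k" using a_nn[of j k] that by simp
    have "\<mu> * (4 / fact j * a j k) powr (1 / real p) \<le> Mt t"
      using le_max[OF that] e_alt[OF that(2)] by simp
    then have "(4 / fact j * a j k) powr (1 / real p) \<le> Mt t / \<mu>"
      using mu by (simp add: pos_le_divide_eq mult.commute)
    then have "((4 / fact j * a j k) powr (1 / real p)) ^ p \<le> (Mt t / \<mu>) ^ p"
      by (intro power_mono) auto
    then show ?thesis using y_pow[OF that(2)] by simp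
  qed
  have L0: "0 \<le> L"
  proof -
    obtain b :: 'x where b: "b \<in> Basis" using nonempty_Basis by blast
    have "0 \<le> L / fact (p + 1) * norm (b - 0) ^ (p + 1)"
      using taylor by (meson norm_ge_zero order_trans insertI1)
    then have h: "0 \<le> L / fact (p + 1)" using b by simp
    have F: "(0::real) < fact (p + 1)" by (rule fact_gt_zero)
    have "L = L / fact (p + 1) * fact (p + 1)" using F by simp
    then show ?thesis using mult_nonneg_nonneg[OF h less_imp_le[OF F]] by linarith
  qed
  have Bf_nn: "0 \<le> Bf M" if "0 \<le> M" for M
    unfolding Bf_def using L0 that mu by simp
  have Hbound: "norm (\<pi> (xp k) - \<pi>s (xp k)) \<le> Bf (Mt t)"
    if t: "1 \<le> t" "t \<le> T" and k: "k < t" and dk: "norm (xp k - xs k) \<le> Mt t" for t k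
  proof -
    define M where "M = Mt t"
    define dn where "dn = norm (xp k - xs k)"
    have M0: "0 \<le> M" "M \<le> 1/2" using Mt_nn[OF t(1)] Mt_alpha[OF t] alpha unfolding M_def by auto
    have dn: "0 \<le> dn" "dn \<le> M" using dk unfolding dn_def M_def by auto
    have T1: "norm (\<pi> (xp k) - \<pi>s (xp k)) \<le> 2 * (L / fact (p + 1)) * dn ^ (p + 1)
      + (\<Sum>j\<le>p. 1 / fact j * a j k * dn ^ j)"
      unfolding dn_def a_def'
      by (rule taylor_diff[OF smooth]) (use taylor in auto)
    have S1: "2 * (L / fact (p + 1)) * dn ^ (p + 1) \<le> 2 * (L / fact (p + 1)) * M ^ (p + 1)"
      using L0 dn by (intro mult_left_mono power_mono) auto
    have split: "(\<Sum>j\<le>p. 1 / fact j * a j k * dn ^ j) = (\<Sum>j<p. 1 / fact j * a j k * dn ^ j) + 1 / fact p * a p k * dn ^ p"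
      by (simp add: lessThan_Suc_atMost[symmetric])
    have S2: "(\<Sum>j<p. 1 / fact j * a j k * dn ^ j) \<le> (\<Sum>j<p. (1/4) * (M / \<mu>) ^ p * M ^ j)"
    proof (rule sum_mono)
      fix j assume "j \<in> {..<p}"
      then have j: "j < p" by simp
      have r: "1 / fact j * a j k \<le> (1/4) * (M / \<mu>) ^ p"
        using ratio[OF k j] unfolding M_def by (simp add: mult.commute)
      show "1 / fact j * a j k * dn ^ j \<le> (1/4) * (M / \<mu>) ^ p * M ^ j"
        using mult_mono[OF r power_mono[OF dn(2) dn(1)]] dn M0 mu by simp
    qed
    have S3: "(\<Sum>j<p. (1/4) * (M / \<mu>) ^ p * M ^ j) \<le> (1/2) * (M / \<mu>) ^ p"
    proof -
      have g: "(\<Sum>j<p. M ^ j) \<le> 2" using geom_le[OF M0, of p] zero_le_power[OF M0(1), of p] by linarith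
      have "(\<Sum>j<p. (1/4) * (M / \<mu>) ^ p * M ^ j) = (1/4) * (M / \<mu>) ^ p * (\<Sum>j<p. M ^ j)"
        by (simp add: sum_distrib_left)
      also have "\<dots> \<le> (1/4) * (M / \<mu>) ^ p * 2"
        using g M0 mu by (intro mult_left_mono) auto
      finally show ?thesis by simp
    qed
    have S4: "1 / fact p * a p k * dn ^ p \<le> (1/2) * (M / \<mu>) ^ p"
    proof -
      have ap: "a p k \<le> fact p / (2 * \<mu> ^ p)" using H3 k t unfolding a_def by auto
      have "1 / fact p * a p k * dn ^ p \<le> 1 / fact p * (fact p / (2 * \<mu> ^ p)) * M ^ p"
        using ap dn a_nn[of p k] mu by (intro mult_mono power_mono mult_left_mono) auto
      also have "\<dots> = (1/2) * (M / \<mu>) ^ p" by (simp add: power_divide)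
      finally show ?thesis .
    qed
    show ?thesis using T1 S1 S2 S3 S4 unfolding split Bf_def M_def[symmetric] by linarith
  qed
  have ISS12: "class_KL \<beta>" "class_K \<gamma>" using ISS unfolding local_dISS_def by auto
  have ISS3: "\<And>\<Delta> t. (\<forall>s. norm (\<Delta> s) \<le> \<eta>) \<Longrightarrow>
        norm (traj f \<pi>s \<xi> \<Delta> t - traj f \<pi>s \<xi> (\<lambda>_. 0) t) \<le> \<beta> (norm (\<xi> - \<xi>)) t + \<gamma> (max_pert \<Delta> t)"
    using ISS xi unfolding local_dISS_def by blast
  note ISS' = ISS12 ISS3
  have beta0: "\<beta> 0 t = 0" for t using ISS'(1) unfolding class_KL_def class_K_def by auto
  have gsm: "strict_mono_on {0..} \<gamma>" using ISS'(2) unfolding class_K_def by auto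
  have main: "norm (xs t - xp t) \<le> Mt t" if "1 \<le> t" "t \<le> T" for t
    using that
  proof (induction t rule: less_induct)
    case (less t)
    define M where "M = Mt t"
    have M0: "0 \<le> M" "M \<le> \<alpha>" using Mt_nn Mt_alpha less.prems unfolding M_def by auto
    have dk: "norm (xp k - xs k) \<le> M" if k: "k < t" for k
    proof (cases "k = 0")
      case True then show ?thesis using M0 unfolding xp_def xs_def by simp
    next
      case False
      then have "norm (xs k - xp k) \<le> Mt k" using less.IH[of k] k less.prems by simp
      also have "\<dots> \<le> Mt t" using Mt_mono[of k t] False k by simp
      finally show ?thesis unfolding M_def by (simp add: norm_minus_commute)
    qed
    define \<Delta> where "\<Delta> = (\<lambda>s. if s < t then \<pi> (xp s) - \<pi>s (xp s) else 0)"
    have Db: "norm (\<Delta> s) \<le> Bf M" for s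
      unfolding \<Delta>_def M_def using Hbound[OF less.prems] dk Bf_nn[OF M0(1)]
      unfolding M_def by auto
    have tr: "traj f \<pi>s \<xi> \<Delta> t = xp t"
      using traj_eq[of t \<Delta> \<pi> f \<xi> \<pi>s t] unfolding \<Delta>_def xp_def by simp
    have Deta: "\<forall>s. norm (\<Delta> s) \<le> \<eta>"
      using Db Mt_eta[OF less.prems] unfolding M_def by (meson order_trans)
    have I: "norm (xp t - xs t) \<le> \<gamma> (max_pert \<Delta> t)"
      using ISS'(3)[OF Deta, of t] tr beta0 unfolding xs_def by simp
    have mp0: "0 \<le> max_pert \<Delta> t" unfolding max_pert_def by (intro Max_ge) auto
    have mp1: "max_pert \<Delta> t \<le> Bf M" unfolding max_pert_def
      using Db Bf_nn[OF M0(1)] by (intro Max.boundedI) auto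
    have "\<gamma> (max_pert \<Delta> t) \<le> \<gamma> (Bf M)"
      using strict_mono_on_leD[OF gsm, of "max_pert \<Delta> t" "Bf M"] mp0 mp1 by simp
    also have "\<dots> \<le> M"
      using gamma_bound[OF ISS'(2) M0(1) Bf_nn[OF M0(1)]] ginv_cond M0 unfolding Bf_def by auto
    finally show ?case using I unfolding M_def by (simp add: norm_minus_commute)
  qed
  show ?thesis using main unfolding Mt_def Ms_def xs_def xp_def by auto
qed

end
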